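(* For real $\alpha,\beta$, the inequalities $M_{\alpha }\left( 1,\cosh x;\tfrac{2}{3}\right) <\frac{\sinh x}{x}<M_{\beta }\left( 1,\cosh x;\tfrac{2}{3}\right)$ hold for all $x\in(0,\infty)$ if and only if $\alpha \leq 0$ and $\beta \geq 4/5$.
   Context: For $a,b>0$ and $w\in(0,1)$, the weighted power mean is $M_{r}(a,b;w)=\left( wa^{r}+(1-w) b^{r}\right)^{1/r}$ if $r\neq 0$ and $M_{0}(a,b;w)=a^{w}b^{1-w}$. *)

theory Defs
  imports Complex_Main
begin

definition power_mean :: "real \<Rightarrow> real \<Rightarrow> real \<Rightarrow> real \<Rightarrow> real" where
  "power_mean r a b w =
     (if r = 0 then a powr w * b powr (1 - w)
      else (w * a powr r + (1 - w) * b powr r) powr (1 / r))"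

end

theory Submission
  imports Defs "HOL-Analysis.Convex" "HOL-Real_Asymp.Real_Asymp"
begin

lemma pos_from_deriv:
  fixes g g' :: "real \<Rightarrow> real"
  assumes d: "\<And>x. x > 0 \<Longrightarrow> (g has_real_derivative g' x) (at x)"
    and p: "\<And>x. x > 0 \<Longrightarrow> g' x > 0"
    and l: "(g \<longlongrightarrow> 0) (at_right 0)" and x: "x > 0"
  shows "g x > 0"
proof -
  have mono: "g a < g b" if "0 < a" "a < b" for a b
  proof (rule DERIV_pos_imp_increasing[OF that(2)])
    fix y assume "a \<le> y" "y \<le> b"
    then have "y > 0" using that by linarith
    then show "\<exists>z. (g has_real_derivative z) (at y) \<and> 0 < z" using d p by blast
  qed
  have "0 \<le> g (x/2)"
  proof (rule tendsto_upperbound[OF l])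
    show "\<forall>\<^sub>F y in at_right 0. g y \<le> g (x/2)"
    proof -
      have "\<forall>\<^sub>F y in at_right 0. y \<in> {0<..<x/2}" using x by (intro eventually_at_right_real) simp
      then show ?thesis
      proof (rule eventually_mono)
        fix y assume "y \<in> {0<..<x/2}"
        then show "g y \<le> g (x/2)" using mono[of y "x/2"] by auto
      qed
    qed
  qed simp
  also have "\<dots> < g x" using x by (intro mono) auto
  finally show ?thesis .
qed

lemma series_pos:
  fixes b :: "nat \<Rightarrow> real"
  assumes s: "(\<lambda>n. b n * x^n / fact n) sums S" and b: "\<And>n. b n \<ge> 0" "b k > 0" and x: "x > 0"
  shows "S > 0"
proof -
  have "0 < suminf (\<lambda>n. b n * x^n / fact n)"
    using s b x by (subst suminf_pos_iff) (auto simp: sums_iff intro!: exI[of _ k])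
  then show ?thesis using s by (simp add: sums_iff)
qed

lemma exp_ser: "(\<lambda>n. a^n * x^n / fact n) sums exp (a*x::real)"
  using exp_converges[of "a*x"] by (simp add: power_mult_distrib divide_inverse mult.commute)

lemma xexp_ser: "(\<lambda>n. real n * a^(n-1) * x^n / fact n) sums (x * exp (a*x::real))"
proof -
  have "(\<lambda>n. x * (a^n * x^n / fact n)) sums (x * exp(a*x))" by (rule sums_mult[OF exp_ser])
  moreover have eq: "(\<lambda>n. x * (a^n * x^n / fact n)) = (\<lambda>n. (\<lambda>n. real n * a^(n-1) * x^n / fact n) (Suc n))"
    by (rule ext) (simp add: divide_simps)
  ultimately have "(\<lambda>n. (\<lambda>n. real n * a^(n-1) * x^n / fact n) (Suc n)) sums (x*exp(a*x))"
    by (simp only: eq)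
  then show ?thesis by (subst (asm) sums_Suc_iff) simp
qed

lemma x2exp_ser: "(\<lambda>n. real n * (real n - 1) * a^(n-2) * x^n / fact n) sums (x^2 * exp (a*x::real))"
proof -
  have "(\<lambda>n. x * (real n * a^(n-1) * x^n / fact n)) sums (x * (x * exp(a*x)))" by (rule sums_mult[OF xexp_ser])
  moreover have eq: "(\<lambda>n. x * (real n * a^(n-1) * x^n / fact n)) = (\<lambda>n. (\<lambda>n. real n * (real n - 1) * a^(n-2) * x^n / fact n) (Suc n))"
    by (rule ext) (simp add: divide_simps)
  ultimately have "(\<lambda>n. (\<lambda>n. real n * (real n - 1) * a^(n-2) * x^n / fact n) (Suc n)) sums (x*(x*exp(a*x)))"
    by (simp only: eq)
  then show ?thesis by (subst (asm) sums_Suc_iff) (simp add: power2_eq_square mult.assoc)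
qed

definition bH :: "nat \<Rightarrow> real" where
 "bH n = 1/2*(real n*3^(n-1)) - 1/2*(real n*(-3)^(n-1)) - 9/8*3^n - 9/8*(-3)^n + 9/8*1^n + 9/8*(-1)^n
     + 3*(real n*(real n - 1)*1^(n-2)) + 3*(real n*(real n - 1)*(-1)^(n-2))"

lemma bH_ser: "(\<lambda>n. bH n * x^n / fact n) sums
   (1/2*(x*exp(3*x)) - 1/2*(x*exp((-3)*x)) - 9/8*exp(3*x) - 9/8*exp((-3)*x) + 9/8*exp(1*x) + 9/8*exp((-1)*x)
     + 3*(x^2*exp(1*x)) + 3*(x^2*exp((-1)*x)))"
proof -
  have "(\<lambda>n. 1/2*(real n*3^(n-1)*x^n/fact n) - 1/2*(real n*(-3)^(n-1)*x^n/fact n) - 9/8*(3^n*x^n/fact n)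
     - 9/8*((-3)^n*x^n/fact n) + 9/8*(1^n*x^n/fact n) + 9/8*((-1)^n*x^n/fact n)
     + 3*(real n*(real n - 1)*1^(n-2)*x^n/fact n) + 3*(real n*(real n - 1)*(-1)^(n-2)*x^n/fact n)) sums
   (1/2*(x*exp(3*x)) - 1/2*(x*exp((-3)*x)) - 9/8*exp(3*x) - 9/8*exp((-3)*x) + 9/8*exp(1*x) + 9/8*exp((-1)*x)
     + 3*(x^2*exp(1*x)) + 3*(x^2*exp((-1)*x)))"
    by (intro sums_add sums_diff sums_mult xexp_ser exp_ser x2exp_ser)
  moreover have "(\<lambda>n. 1/2*(real n*3^(n-1)*x^n/fact n) - 1/2*(real n*(-3)^(n-1)*x^n/fact n) - 9/8*(3^n*x^n/fact n)
     - 9/8*((-3)^n*x^n/fact n) + 9/8*(1^n*x^n/fact n) + 9/8*((-1)^n*x^n/fact n)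
     + 3*(real n*(real n - 1)*1^(n-2)*x^n/fact n) + 3*(real n*(real n - 1)*(-1)^(n-2)*x^n/fact n)) = (\<lambda>n. bH n * x^n / fact n)"
    by (rule ext) (simp add: bH_def add_divide_distrib diff_divide_distrib algebra_simps)
  ultimately show ?thesis by (simp only:)
qed

lemma Hc_exp: "x*sinh(3*x) - 9/4*cosh(3*x) + 9/4*cosh x + 6*x^2*cosh x =
   (1/2*(x*exp(3*x)) - 1/2*(x*exp((-3)*x)) - 9/8*exp(3*x) - 9/8*exp((-3)*x) + 9/8*exp(1*x) + 9/8*exp((-1)*x)
     + 3*(x^2*exp(1*x)) + 3*(x^2*exp((-1)*x::real)))"
  by (simp add: sinh_def cosh_def field_simps)

lemma bH_nonneg: "bH n \<ge> 0"
proof (cases "n < 8")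
  case True
  then have "n = 0 \<or> n = 1 \<or> n = 2 \<or> n = 3 \<or> n = 4 \<or> n = 5 \<or> n = 6 \<or> n = 7" by linarith
  then show ?thesis by (elim disjE) (simp_all add: bH_def)
next
  case False
  define m where "m = n - 2"
  have m: "n = m + 2" using False unfolding m_def by simp
  show ?thesis
  proof (cases "even n")
    case True
    then have e: "even m" using m by simp
    have "bH n = real n * 3^(m+1) - 27/4 * 3^(m+1) + 9/4 + 6*(real n*(real n - 1))"
      using e m by (simp add: bH_def)
    also have "\<dots> = (real n - 27/4) * 3^(m+1) + 9/4 + 6*(real n*(real n - 1))" by (simp add: algebra_simps)
    also have "\<dots> \<ge> 0" using False by (intro add_nonneg_nonneg mult_nonneg_nonneg) auto
    finally show ?thesis .
  next
    case False
    then have e: "odd m" using m by simp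
    have "bH n = 0"
      using e m by (simp add: bH_def)
    then show ?thesis by simp
  qed
qed

lemma H_pos: "x > 0 \<Longrightarrow> x*sinh(3*x) - 9/4*cosh(3*x) + 9/4*cosh x + 6*x^2*cosh x > (0::real)"
  unfolding Hc_exp by (rule series_pos[OF bH_ser bH_nonneg, of 8]) (simp_all add: bH_def)

lemma exp2_facts: "exp (2*x) = exp (x::real) ^ 2" "exp ((-2)*x) = inverse (exp x ^ 2)"
  by (simp_all add: exp_double exp_minus[symmetric] exp_minus)
lemma ch_sh: "cosh x = (exp x + inverse (exp x))/2" "sinh x = (exp x - inverse (exp x))/(2::real)"
  by (simp_all add: cosh_def sinh_def exp_minus)
lemma G_alg: "E \<noteq> 0 \<Longrightarrow> 2*x*((E + inverse E)/2)^2 + x - 3*((E - inverse E)/2)*((E + inverse E)/2) =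
   (1/2*(x*E^2) + 1/2*(x*inverse (E^2)) + 2*(x*1) - 3/4*E^2 + 3/4*inverse(E^2::real))"
  by (simp add: field_simps power2_eq_square)
lemma G_exp: "2*x*cosh x^2 + x - 3*sinh x*cosh x =
   (1/2*(x*exp(2*x)) + 1/2*(x*exp((-2)*x)) + 2*(x*exp(0*x)) - 3/4*exp(2*x) + 3/4*exp((-2)*(x::real)))"
  unfolding exp2_facts ch_sh mult_zero_left exp_zero by (rule G_alg) simp
lemma B_alg: "E \<noteq> 0 \<Longrightarrow> ((E - inverse E)/2)*((E + inverse E)/2) - x =
   (1/4*E^2 - 1/4*inverse(E^2) - x*(1::real))"
  by (simp add: field_simps power2_eq_square)
lemma B_exp: "sinh x * cosh x - x =
   (1/4*exp(2*x) - 1/4*exp((-2)*x) - x*exp(0*(x::real)))"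
  unfolding exp2_facts ch_sh mult_zero_left exp_zero by (rule B_alg) simp

definition bG :: "nat \<Rightarrow> real" where
 "bG n = 1/2*(real n*2^(n-1)) + 1/2*(real n*(-2)^(n-1)) + 2*(real n*0^(n-1)) - 3/4*2^n + 3/4*(-2)^n"

lemma bG_ser: "(\<lambda>n. bG n * x^n / fact n) sums
   (1/2*(x*exp(2*x)) + 1/2*(x*exp((-2)*x)) + 2*(x*exp(0*x)) - 3/4*exp(2*x) + 3/4*exp((-2)*x))"
proof -
  have "(\<lambda>n. 1/2*(real n*2^(n-1)*x^n/fact n) + 1/2*(real n*(-2)^(n-1)*x^n/fact n) + 2*(real n*0^(n-1)*x^n/fact n)
     - 3/4*(2^n*x^n/fact n) + 3/4*((-2)^n*x^n/fact n)) sums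
   (1/2*(x*exp(2*x)) + 1/2*(x*exp((-2)*x)) + 2*(x*exp(0*x)) - 3/4*exp(2*x) + 3/4*exp((-2)*x))"
    by (intro sums_add sums_diff sums_mult xexp_ser exp_ser x2exp_ser)
  moreover have "(\<lambda>n. 1/2*(real n*2^(n-1)*x^n/fact n) + 1/2*(real n*(-2)^(n-1)*x^n/fact n) + 2*(real n*0^(n-1)*x^n/fact n)
     - 3/4*(2^n*x^n/fact n) + 3/4*((-2)^n*x^n/fact n)) = (\<lambda>n. bG n * x^n / fact n)"
    by (rule ext) (simp add: bG_def add_divide_distrib diff_divide_distrib algebra_simps)
  ultimately show ?thesis by (simp only:)
qed

lemma bG_nonneg: "bG n \<ge> 0"
proof (cases "n < 4")
  case True
  then have "n = 0 \<or> n = 1 \<or> n = 2 \<or> n = 3" by linarith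
  then show ?thesis by (elim disjE) (simp_all add: bG_def)
next
  case False
  define m where "m = n - 2"
  have m: "n = m + 2" using False unfolding m_def by simp
  show ?thesis
  proof (cases "even n")
    case True
    then have e: "even m" using m by simp
    have "bG n = 0" using e m by (simp add: bG_def)
    then show ?thesis by simp
  next
    case False
    then have e: "odd m" using m by simp
    have "bG n = (real n - 3) * 2^(m+1)"
      using e m by (simp add: bG_def algebra_simps)
    also have "\<dots> \<ge> 0" using \<open>\<not> n < 4\<close> by (intro mult_nonneg_nonneg) auto
    finally show ?thesis .
  qed
qed

lemma G_pos: "x > 0 \<Longrightarrow> 2*x*cosh x^2 + x - 3*sinh x*cosh x > (0::real)"
  unfolding G_exp by (rule series_pos[OF bG_ser bG_nonneg, of 5]) (simp_all add: bG_def)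

definition bA :: "nat \<Rightarrow> real" where
 "bA n = 1/2*(real n*1^(n-1)) + 1/2*(real n*(-1)^(n-1)) - 1/2*1^n + 1/2*(-1)^n"

lemma bA_ser: "(\<lambda>n. bA n * x^n / fact n) sums
   (1/2*(x*exp(1*x)) + 1/2*(x*exp((-1)*x)) - 1/2*exp(1*x) + 1/2*exp((-1)*x))"
proof -
  have "(\<lambda>n. 1/2*(real n*1^(n-1)*x^n/fact n) + 1/2*(real n*(-1)^(n-1)*x^n/fact n)
     - 1/2*(1^n*x^n/fact n) + 1/2*((-1)^n*x^n/fact n)) sums
   (1/2*(x*exp(1*x)) + 1/2*(x*exp((-1)*x)) - 1/2*exp(1*x) + 1/2*exp((-1)*x))"
    by (intro sums_add sums_diff sums_mult xexp_ser exp_ser x2exp_ser)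
  moreover have "(\<lambda>n. 1/2*(real n*1^(n-1)*x^n/fact n) + 1/2*(real n*(-1)^(n-1)*x^n/fact n)
     - 1/2*(1^n*x^n/fact n) + 1/2*((-1)^n*x^n/fact n)) = (\<lambda>n. bA n * x^n / fact n)"
    by (rule ext) (simp add: bA_def add_divide_distrib diff_divide_distrib algebra_simps)
  ultimately show ?thesis by (simp only:)
qed

lemma A_exp: "x*cosh x - sinh x =
   (1/2*(x*exp(1*x)) + 1/2*(x*exp((-1)*x)) - 1/2*exp(1*x) + 1/2*exp((-1)*(x::real)))"
  by (simp add: sinh_def cosh_def field_simps)

lemma bA_nonneg: "bA n \<ge> 0"
proof (cases "n < 2")
  case True
  then have "n = 0 \<or> n = 1" by linarith
  then show ?thesis by (elim disjE) (simp_all add: bA_def)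
next
  case False
  define m where "m = n - 2"
  have m: "n = m + 2" using False unfolding m_def by simp
  show ?thesis
  proof (cases "even n")
    case True
    then have e: "even m" using m by simp
    have "bA n = 0" using e m by (simp add: bA_def field_simps)
    then show ?thesis by simp
  next
    case False
    then have e: "odd m" using m by simp
    have "bA n = real n - 1"
      using e m by (simp add: bA_def algebra_simps)
    then show ?thesis using m by simp
  qed
qed

lemma A_pos: "x > 0 \<Longrightarrow> x*cosh x - sinh x > (0::real)"
  unfolding A_exp by (rule series_pos[OF bA_ser bA_nonneg, of 3]) (simp_all add: bA_def)

definition bB :: "nat \<Rightarrow> real" where
 "bB n = 1/4*2^n - 1/4*(-2)^n - real n*0^(n-1)"

lemma bB_ser: "(\<lambda>n. bB n * x^n / fact n) sums
   (1/4*exp(2*x) - 1/4*exp((-2)*x) - x*exp(0*x))"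
proof -
  have "(\<lambda>n. 1/4*(2^n*x^n/fact n) - 1/4*((-2)^n*x^n/fact n) - (real n*0^(n-1)*x^n/fact n)) sums
   (1/4*exp(2*x) - 1/4*exp((-2)*x) - x*exp(0*x))"
    by (intro sums_add sums_diff sums_mult xexp_ser exp_ser x2exp_ser)
  moreover have "(\<lambda>n. 1/4*(2^n*x^n/fact n) - 1/4*((-2)^n*x^n/fact n) - (real n*0^(n-1)*x^n/fact n)) = (\<lambda>n. bB n * x^n / fact n)"
    by (rule ext) (simp add: bB_def add_divide_distrib diff_divide_distrib algebra_simps)
  ultimately show ?thesis by (simp only:)
qed

lemma bB_nonneg: "bB n \<ge> 0"
proof (cases "n < 2")
  case True
  then have "n = 0 \<or> n = 1" by linarith
  then show ?thesis by (elim disjE) (simp_all add: bB_def)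
next
  case False
  define m where "m = n - 2"
  have m: "n = m + 2" using False unfolding m_def by simp
  show ?thesis
  proof (cases "even n")
    case True
    then have e: "even m" using m by simp
    have "bB n = 0" using e m by (simp add: bB_def)
    then show ?thesis by simp
  next
    case False
    then have e: "odd m" using m by simp
    have "bB n = 1/2 * 2^n"
      using e m by (simp add: bB_def algebra_simps)
    moreover have "(0::real) \<le> 2^n" by simp
    ultimately show ?thesis by linarith
  qed
qed

lemma B_pos: "x > 0 \<Longrightarrow> sinh x * cosh x - x > (0::real)"
  unfolding B_exp by (rule series_pos[OF bB_ser bB_nonneg, of 3]) (simp_all add: bB_def)

lemma K_deriv: assumes x: "x > 0" shows "((\<lambda>x::real. ln(sinh x * cosh x - x) - ln(2*(x*cosh x - sinh x)) - ln(cosh x)/5) has_real_derivative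
   (2*sinh x^2/(sinh x * cosh x - x) - x*sinh x/(x*cosh x - sinh x) - sinh x/(5*cosh x))) (at x)"
proof -
  have a: "0 < sinh x * cosh x - x" "0 < x*cosh x - sinh x" "0 < cosh x" using B_pos A_pos x by auto
  have b: "x < sinh x * cosh x" "sinh x < x * cosh x" using a by auto
    have e: "cosh x * cosh x + sinh x * sinh x - 1 = 2 * sinh x^2" using cosh_square_eq[of x] by (simp add: power2_eq_square)
  have e2: "2 * (x * cosh x) - 2 * sinh x = 2*(x*cosh x - sinh x)" by simp
  have e3: "sinh x * x * 2 / (2 * (x * cosh x) - 2 * sinh x) = x * sinh x / (x * cosh x - sinh x)"
  proof -
    have "sinh x * x * 2 = 2*(x*sinh x)" by simp
    then show ?thesis by (simp only: e2) (rule mult_divide_mult_cancel_left, simp)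
  qed
  show ?thesis
  apply (rule derivative_eq_intros refl | simp add: a b)+
  apply (simp add: e e3)
  done
qed

lemma frac20: "20 * A / (40 + 20 * B) = A / (2 + (B::real))"
proof -
  have "40 + 20 * B = 20 * (2 + B)" by simp
  then have "20 * A / (40 + 20 * B) = (20 * A) / (20 * (2+B))" by (simp only:)
  also have "\<dots> = A/(2+B)" by (rule mult_divide_mult_cancel_left) simp
  finally show ?thesis .
qed

lemma F_deriv: assumes x: "x > 0" shows "((\<lambda>x::real. 5/4*ln(2/3 + cosh x powr (4/5)/3) - ln(sinh x) + ln x) has_real_derivative
   (sinh x * cosh x powr (-1/5) / (2 + cosh x powr (4/5)) - cosh x / sinh x + 1/x)) (at x)"
proof -
  have c: "0 < cosh x powr (4/5)" by simp
  have a: "0 < 2/3 + cosh x powr (4/5)/3" using c by linarith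
  have a2: "0 < sinh x" "0 < cosh x" using x by auto
  show ?thesis
  apply (rule derivative_eq_intros refl | simp add: a a2 x)+
  apply (simp add: frac20)
  done
qed

lemma L_deriv: assumes x: "x > 0" shows "((\<lambda>x::real. ln(sinh x) - ln x - ln(cosh x)/3) has_real_derivative
   (cosh x / sinh x - 1/x - sinh x/(3*cosh x))) (at x)"
proof -
  have a2: "0 < sinh x" "0 < cosh x" using x by auto
  show ?thesis
  apply (rule derivative_eq_intros refl | simp add: a2 x)+
  done
qed

lemma H_alg: "E \<noteq> 0 \<Longrightarrow>
  10*((E + inverse E)/2)*((E - inverse E)/2)*(y*((E + inverse E)/2) - ((E - inverse E)/2))
  - 5*y*((E + inverse E)/2)*(((E - inverse E)/2)*((E + inverse E)/2) - y)
  - (((E - inverse E)/2)*((E + inverse E)/2) - y)*(y*((E + inverse E)/2) - ((E - inverse E)/2))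
  = y*((E^3 - inverse (E^3))/2) - 9/4*((E^3 + inverse (E^3))/2) + 9/4*((E + inverse E)/2) + 6*y^2*((E + inverse E)/2::real)"
  by (simp add: field_simps power2_eq_square) (simp add: algebra_simps eval_nat_numeral)

lemma Hprod_eq: "10*cosh y*sinh y*(y*cosh y - sinh y) - 5*y*cosh y*(sinh y*cosh y - y) - (sinh y*cosh y - y)*(y*cosh y - sinh y)
   = y*sinh(3*y) - 9/4*cosh(3*y) + 9/4*cosh y + 6*y^2*cosh (y::real)"
proof -
  have e: "exp (3*y) = exp y ^ 3" using exp_of_nat_mult[of 3 y] by simp
  show ?thesis unfolding ch_sh e by (rule H_alg) simp
qed

lemma Kalg: "A > 0 \<Longrightarrow> B > 0 \<Longrightarrow> c > 0 \<Longrightarrow>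
  2*s^2/B - y*s/A - s/(5*c) = s*(10*c*s*A - 5*y*c*B - B*A)/(5*c*A*(B::real))"
  by (simp add: field_simps power2_eq_square)

lemma K_pos: fixes x :: real assumes x: "x > 0"
  shows "2 * cosh x powr (1/5) * (x*cosh x - sinh x) < sinh x * cosh x - x"
proof -
  define K where "K = (\<lambda>x::real. ln(sinh x * cosh x - x) - ln(2*(x*cosh x - sinh x)) - ln(cosh x)/5)"
  define K' where "K' = (\<lambda>x::real. 2*sinh x^2/(sinh x * cosh x - x) - x*sinh x/(x*cosh x - sinh x) - sinh x/(5*cosh x))"
  have "K x > 0"
  proof (rule pos_from_deriv[of K K'])
    show "(K has_real_derivative K' y) (at y)" if "y > 0" for y
      unfolding K_def K'_def by (rule K_deriv[OF that])
    show "K' y > 0" if y: "y > 0" for y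
    proof -
      define s c where "s = sinh y" and "c = cosh y"
      have A: "y*c - s > 0" and B: "s*c - y > 0" and cp: "c > 0" and sp: "s > 0"
        using A_pos[OF y] B_pos[OF y] y by (auto simp: s_def c_def)
      have eq: "K' y = s * (10*c*s*(y*c - s) - 5*y*c*(s*c - y) - (s*c - y)*(y*c - s)) / (5*c*(y*c-s)*(s*c-y))"
        unfolding K'_def s_def[symmetric] c_def[symmetric] using Kalg[OF A B cp, of s y]
        by (simp add: mult.commute)
      have "10*c*s*(y*c - s) - 5*y*c*(s*c - y) - (s*c - y)*(y*c - s) > 0"
        unfolding s_def c_def Hprod_eq using H_pos[OF y] .
      then show ?thesis unfolding eq using A B cp sp by (intro divide_pos_pos mult_pos_pos) auto
    qed
    show "(K \<longlongrightarrow> 0) (at_right 0)" unfolding K_def by real_asymp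
  qed (rule x)
  have A: "x*cosh x - sinh x > 0" and B: "sinh x*cosh x - x > 0" using A_pos[OF x] B_pos[OF x] by auto
  have "ln (cosh x powr (1/5)) < ln ((sinh x*cosh x - x) / (2*(x*cosh x - sinh x)))"
    using \<open>K x > 0\<close> A B by (simp add: K_def ln_div)
  then have "cosh x powr (1/5) < (sinh x*cosh x - x) / (2*(x*cosh x - sinh x))"
    using A B by (subst (asm) ln_less_cancel_iff) auto
  then show ?thesis using A by (simp add: field_simps)
qed

lemma Falg:
  fixes s c y w :: real
  assumes sp: "s > 0" and cp: "c > 0" and yp: "y > 0" and wp: "w > 0"
    and w5: "w^5 = c" and cs: "c^2 = s^2 + 1" and Q: "2 * w * (y*c - s) < s*c - y"
  shows "s / (w*(2 + w^4)) - c/s + 1/y > 0"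
proof -
  have D: "w*(2+w^4) = 2*w + c" using w5 by (simp add: algebra_simps eval_nat_numeral)
  have dp: "2*w + c > 0" using wp cp by simp
  have e1: "(y*c - s)*(2*w+c) = 2*w*(y*c-s) + (y*c - s)*c" by (simp add: algebra_simps)
  have "(s*c - y) + (y*c - s)*c = y*(c*c) - y" by (simp add: algebra_simps)
  also have "\<dots> = y*s^2" using cs by (simp add: power2_eq_square algebra_simps)
  finally have e2: "(s*c - y) + (y*c - s)*c = y*s^2" .
  have e3: "s*(y*s) = y*s^2" by (simp add: power2_eq_square)
  have key: "(y*c - s)*(2*w+c) < s*(y*s)" using e1 e2 e3 Q by linarith
  have "(y*c - s)/(y*s) < s/(2*w+c)"
    using key dp sp yp by (simp add: divide_simps mult.commute)
  moreover have "c/s - 1/y = (y*c - s)/(y*s)" using sp yp by (simp add: field_simps)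
  ultimately show ?thesis unfolding D by linarith
qed

lemma F_pos: fixes x :: real assumes x: "x > 0"
  shows "sinh x / x < (2/3 + cosh x powr (4/5)/3) powr (5/4)"
proof -
  define F where "F = (\<lambda>x::real. 5/4*ln(2/3 + cosh x powr (4/5)/3) - ln(sinh x) + ln x)"
  define F' where "F' = (\<lambda>x::real. sinh x * cosh x powr (-1/5) / (2 + cosh x powr (4/5)) - cosh x / sinh x + 1/x)"
  have "F x > 0"
  proof (rule pos_from_deriv[of F F'])
    show "(F has_real_derivative F' y) (at y)" if "y > 0" for y
      unfolding F_def F'_def by (rule F_deriv[OF that])
    show "F' y > 0" if y: "y > 0" for y
    proof -
      define s c w where "s = sinh y" and "c = cosh y" and "w = cosh y powr (1/5)"
      have cp: "c > 0" and sp: "s > 0" using y by (auto simp: s_def c_def)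
      have wp: "w > 0" using cp by (simp add: w_def c_def)
      have w5: "w^5 = c" unfolding w_def c_def using cp by (simp add: powr_power c_def)
      have w4: "cosh y powr (4/5) = w^4" unfolding w_def using cp by (simp add: powr_power c_def)
      have "cosh y powr (-1/5) = cosh y powr (-(1/5))" by simp
      also have "\<dots> = inverse (cosh y powr (1/5))" by (rule powr_minus)
      finally have wm: "cosh y powr (-1/5) = 1/w" unfolding w_def by (simp add: inverse_eq_divide)
      have cs: "c^2 = s^2 + 1" unfolding c_def s_def by (rule cosh_square_eq)
      have Q: "2 * w * (y*c - s) < s*c - y" using K_pos[OF y] by (simp add: w_def c_def s_def)
      have "s / (w*(2 + w^4)) - c/s + 1/y > 0" by (rule Falg[OF sp cp y wp w5 cs Q])
      moreover have wm': "c powr (-(1/5)) = 1/w" and w4': "c powr (4/5) = w^4" using wm w4 by (simp_all add: c_def)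
      ultimately show ?thesis unfolding F'_def s_def[symmetric] c_def[symmetric] by simp
    qed
    show "(F \<longlongrightarrow> 0) (at_right 0)" unfolding F_def by real_asymp
  qed (rule x)
  have Pp: "0 < 2/3 + cosh x powr (4/5)/3" by (simp add: add_pos_nonneg)
  have sp: "sinh x > 0" using x by simp
  have "ln (sinh x / x) < 5/4 * ln (2/3 + cosh x powr (4/5)/3)"
    using \<open>F x > 0\<close> x sp by (simp add: F_def ln_div)
  then have "exp (ln (sinh x / x)) < exp (5/4 * ln (2/3 + cosh x powr (4/5)/3))" by simp
  then show ?thesis using x sp Pp by (simp add: powr_def)
qed

lemma L_pos: fixes x :: real assumes x: "x > 0"
  shows "cosh x powr (1/3) < sinh x / x"
proof -
  define L where "L = (\<lambda>x::real. ln(sinh x) - ln x - ln(cosh x)/3)"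
  define L' where "L' = (\<lambda>x::real. cosh x / sinh x - 1/x - sinh x/(3*cosh x))"
  have "L x > 0"
  proof (rule pos_from_deriv[of L L'])
    show "(L has_real_derivative L' y) (at y)" if "y > 0" for y
      unfolding L_def L'_def by (rule L_deriv[OF that])
    show "L' y > 0" if y: "y > 0" for y
    proof -
      define s c where "s = sinh y" and "c = cosh y"
      have cp: "c > 0" and sp: "s > 0" using y by (auto simp: s_def c_def)
      have cs: "c^2 = s^2 + 1" unfolding c_def s_def by (rule cosh_square_eq)
      have G: "2*y*c^2 + y - 3*s*c > 0" using G_pos[OF y] by (simp add: s_def c_def)
      have eq: "L' y = (3*y*c^2 - 3*s*c - y*s^2) / (3*y*s*c)"
        unfolding L'_def s_def[symmetric] c_def[symmetric] using cp sp y
        by (simp add: field_simps power2_eq_square)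
      have "3*y*c^2 - 3*s*c - y*s^2 = 2*y*c^2 + y - 3*s*c" using cs by (simp add: algebra_simps)
      then show ?thesis unfolding eq using G cp sp y by simp
    qed
    show "(L \<longlongrightarrow> 0) (at_right 0)" unfolding L_def by real_asymp
  qed (rule x)
  have sp: "sinh x > 0" using x by simp
  have "ln (cosh x)/3 < ln (sinh x / x)"
    using \<open>L x > 0\<close> x sp by (simp add: L_def ln_div)
  then have "exp (ln (cosh x)/3) < exp (ln (sinh x / x))" by simp
  then show ?thesis using x sp by (simp add: powr_def)
qed

lemma pm_mono:
  fixes p q c :: real
  assumes p: "0 < p" and pq: "p \<le> q" and c: "c > 0"
  shows "(2/3 + c powr p/3) powr (1/p) \<le> (2/3 + c powr q/3) powr (1/q)"
proof -
  define r where "r = q/p"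
  define v where "v = c powr p"
  have r1: "r \<ge> 1" using p pq by (simp add: r_def)
  have vp: "v > 0" using c by (simp add: v_def)
  have "(\<lambda>x. x powr r) ((1 - 1/3) *\<^sub>R 1 + (1/3) *\<^sub>R v) \<le> (1 - 1/3) * (\<lambda>x. x powr r) 1 + (1/3) * (\<lambda>x. x powr r) v"
    by (rule convex_onD[OF powr_convex[OF r1]]) (use vp in auto)
  then have conv: "(2/3 + v/3) powr r \<le> 2/3 + c powr q / 3"
    using p c by (simp add: v_def r_def powr_powr)
  have qp: "0 < q" using p pq by simp
  have "((2/3 + v/3) powr r) powr (1/q) \<le> (2/3 + c powr q / 3) powr (1/q)"
    by (rule powr_mono2) (use conv qp vp in auto)
  moreover have "((2/3 + v/3) powr r) powr (1/q) = (2/3 + v/3) powr (1/p)"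
    using qp p by (simp add: powr_powr r_def)
  ultimately show ?thesis by (simp add: v_def)
qed

lemma amgm3: fixes t :: real assumes t: "t > 0" shows "t powr (1/3) \<le> 2/3 + t/3"
proof -
  define u where "u = t powr (1/3)"
  have up: "u > 0" using t by (simp add: u_def)
  have "u^3 = t" unfolding u_def using t by (simp add: powr_power)
  moreover have "0 \<le> (u - 1)^2 * (u + 2)" using up by simp
  ultimately have "3*u \<le> 2 + t" by (simp add: algebra_simps power2_eq_square eval_nat_numeral)
  then show ?thesis by (simp add: u_def)
qed

lemma pm_neg:
  fixes a c :: real
  assumes a: "a < 0" and c: "c > 0"
  shows "(2/3 + c powr a/3) powr (1/a) \<le> c powr (1/3)"
proof -
  define t where "t = c powr a"
  have tp: "t > 0" using c by (simp add: t_def)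
  have "(2/3 + t/3) powr (1/a) \<le> (t powr (1/3)) powr (1/a)"
    by (rule powr_mono2') (use a tp amgm3[OF tp] in auto)
  also have "\<dots> = c powr (1/3)" using a by (simp add: t_def powr_powr)
  finally show ?thesis by (simp add: t_def)
qed

theorem corollary4p4:
  fixes \<alpha> \<beta> :: real
  shows "(\<forall>x::real. x > 0 \<longrightarrow>
            power_mean \<alpha> 1 (cosh x) (2/3) < sinh x / x \<and>
            sinh x / x < power_mean \<beta> 1 (cosh x) (2/3))
         \<longleftrightarrow> (\<alpha> \<le> 0 \<and> \<beta> \<ge> 4/5)"
proof
  assume H: "\<forall>x::real. x > 0 \<longrightarrow>
            power_mean \<alpha> 1 (cosh x) (2/3) < sinh x / x \<and>
            sinh x / x < power_mean \<beta> 1 (cosh x) (2/3)"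
  show "\<alpha> \<le> 0 \<and> \<beta> \<ge> 4/5"
  proof
    show "\<alpha> \<le> 0"
    proof (rule ccontr)
      assume "\<not> \<alpha> \<le> 0" then have a: "\<alpha> > 0" by simp
      define x where "x = 3 powr (1/\<alpha>)"
      have xp: "x > 0" by (simp add: x_def)
      have "cosh x powr \<alpha> / 3 < 2/3 + cosh x powr \<alpha> / 3" by simp
      then have "(cosh x powr \<alpha> / 3) powr (1/\<alpha>) < (2/3 + cosh x powr \<alpha> / 3) powr (1/\<alpha>)"
        by (intro powr_less_mono2) (use a in auto)
      moreover have "(cosh x powr \<alpha> / 3) powr (1/\<alpha>) = cosh x / x"
        using a by (simp add: powr_divide powr_powr x_def)
      moreover have "sinh x / x < cosh x / x" using xp sinh_less_cosh_real[of x] by (simp add: divide_strict_right_mono)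
      moreover have "power_mean \<alpha> 1 (cosh x) (2/3) = (2/3 + cosh x powr \<alpha> / 3) powr (1/\<alpha>)"
        using a by (simp add: power_mean_def)
      moreover have "power_mean \<alpha> 1 (cosh x) (2/3) < sinh x / x" using H xp by blast
      ultimately show False by linarith
    qed
    show "\<beta> \<ge> 4/5"
    proof (rule ccontr)
      assume "\<not> \<beta> \<ge> 4/5" then have b: "\<beta> < 4/5" by simp
      show False
      proof (cases "\<beta> \<le> 0")
        case True
        have x1: "(1::real) > 0" by simp
        have "power_mean \<beta> 1 (cosh 1) (2/3) \<le> cosh 1 powr (1/3)"
        proof (cases "\<beta> = 0")
          case True then show ?thesis by (simp add: power_mean_def)
        next
          case False then have "\<beta> < 0" using \<open>\<beta> \<le> 0\<close> by simp
          then show ?thesis using pm_neg[of \<beta> "cosh 1"] by (simp add: power_mean_def)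
        qed
        moreover have "cosh (1::real) powr (1/3) < sinh 1 / 1" using L_pos[of 1] by simp
        moreover have "sinh 1 / 1 < power_mean \<beta> 1 (cosh 1) (2/3)" using H x1 by blast
        ultimately show False by linarith
      next
        case False
        then have bp: "\<beta> > 0" by simp
        define l where "l = (\<beta> - 1) * \<beta> / 72 + \<beta> / 120 - ((\<beta> - 1) * \<beta> / 8 + \<beta> / 24) / 3"
        have "l = \<beta> * (4 - 5*\<beta>) / 180" by (simp add: l_def field_simps)
        moreover have "\<beta> * (4 - 5*\<beta>) > 0" using bp b by (intro mult_pos_pos) auto
        ultimately have lpos: "l > 0" by simp
        have lim: "((\<lambda>x::real. ((sinh x / x) powr \<beta> - 2/3 - cosh x powr \<beta> / 3) / x^4) \<longlongrightarrow> l) (at_right 0)"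
          unfolding l_def by real_asymp
        have "eventually (\<lambda>x. ((sinh x / x) powr \<beta> - 2/3 - cosh x powr \<beta> / 3) / x^4 > 0) (at_right (0::real))"
          using order_tendstoD(1)[OF lim lpos] .
        moreover have "eventually (\<lambda>x::real. x > 0) (at_right 0)" by (rule eventually_at_right_less)
        ultimately have "eventually (\<lambda>x. ((sinh x / x) powr \<beta> - 2/3 - cosh x powr \<beta> / 3) / x^4 > 0 \<and> x > 0) (at_right (0::real))"
          by (rule eventually_conj)
        then obtain x where D: "((sinh x / x) powr \<beta> - 2/3 - cosh x powr \<beta> / 3) / x^4 > 0" and x: "x > (0::real)"
          using eventually_happens'[of "at_right (0::real)"] by auto
        have sp: "sinh x / x > 0" using x by simp
        have x4: "x^4 > 0" using x by simp
        have ineq1: "(sinh x / x) powr \<beta> > 2/3 + cosh x powr \<beta> / 3"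
          using D x4 by (simp add: zero_less_divide_iff)
        have Pp: "0 < 2/3 + cosh x powr \<beta>/3" by (simp add: add_pos_nonneg)
        have pm: "power_mean \<beta> 1 (cosh x) (2/3) = (2/3 + cosh x powr \<beta> / 3) powr (1/\<beta>)"
          using bp by (simp add: power_mean_def)
        have "sinh x / x < (2/3 + cosh x powr \<beta> / 3) powr (1/\<beta>)" using H x pm by auto
        then have "(sinh x / x) powr \<beta> < ((2/3 + cosh x powr \<beta> / 3) powr (1/\<beta>)) powr \<beta>"
          by (intro powr_less_mono2) (use bp sp in auto)
        also have "\<dots> = 2/3 + cosh x powr \<beta> / 3" using bp Pp by (simp add: powr_powr)
        finally show False using ineq1 by linarith
      qed
    qed
  qed
next
  assume "\<alpha> \<le> 0 \<and> \<beta> \<ge> 4/5"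
  then have a: "\<alpha> \<le> 0" and b: "\<beta> \<ge> 4/5" by auto
  show "\<forall>x::real. x > 0 \<longrightarrow>
            power_mean \<alpha> 1 (cosh x) (2/3) < sinh x / x \<and>
            sinh x / x < power_mean \<beta> 1 (cosh x) (2/3)"
  proof (intro allI impI conjI)
    fix x :: real assume x: "x > 0"
    have cp: "cosh x > 0" by simp
    have "power_mean \<alpha> 1 (cosh x) (2/3) \<le> cosh x powr (1/3)"
    proof (cases "\<alpha> = 0")
      case True then show ?thesis by (simp add: power_mean_def)
    next
      case False then have "\<alpha> < 0" using a by simp
      then show ?thesis using pm_neg[of \<alpha> "cosh x"] by (simp add: power_mean_def)
    qed
    then show "power_mean \<alpha> 1 (cosh x) (2/3) < sinh x / x" using L_pos[OF x] by linarith
    have "sinh x / x < (2/3 + cosh x powr (4/5)/3) powr (5/4)" by (rule F_pos[OF x])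
    also have "\<dots> \<le> (2/3 + cosh x powr \<beta>/3) powr (1/\<beta>)" using pm_mono[of "4/5" \<beta> "cosh x"] b cp by simp
    also have "\<dots> = power_mean \<beta> 1 (cosh x) (2/3)" using b by (simp add: power_mean_def)
    finally show "sinh x / x < power_mean \<beta> 1 (cosh x) (2/3)" .
  qed
qed

end
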